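(* Let $H$ be a set of pairwise disjoint half-open intervals of $\mathbb{R}$. Let $m_1,\dots,m_I$ be distinct interval-domain monomials with $\mathrm{supp}\,m_i\in H$ for all $i\in[I]$, let $g_1,\dots,g_J$ be distinct Gaussian density functions, and let $e_1,\dots,e_K$ be distinct exponential density functions. Then the set $\{m_1,\dots,m_I,g_1,\dots,g_J,e_1,\dots,e_K\}$ is linearly independent in $\mathcal{L}_1(\mathbb{R},\lambda_{\mathit{Leb}})$.
   Context: An interval-domain monomial is a function $x\mapsto x^k\chi_{[a,b)}(x)$ with $k\in\mathbb{N}\cup\{0\}$ and $a<b$, where $\chi_E$ is the characteristic function of $E$; $\mathrm{supp}\,f=\{x\mid f(x)>0\}$. A Gaussian density function is $x\mapsto\frac{1}{\sigma\sqrt{2\pi}}\exp\left(-\frac{(x-\mu)^2}{2\sigma^2}\right)$ with $\mu\in\mathbb{R}$, $\sigma>0$. An exponential density function is $x\mapsto\lambda e^{-\lambda x}\chi_{[0,\infty)}(x)$ with $\lambda>0$. $\mathcal{L}_1(\mathbb{R},\lambda_{\mathit{Leb}})$ is the space of Lebesgue-integrable functions modulo equality almost everywhere. *)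

theory Defs
  imports "HOL-Probability.Probability"
begin

definition interval_monomial :: "nat \<Rightarrow> real \<Rightarrow> real \<Rightarrow> real \<Rightarrow> real" where
  "interval_monomial k a b x = x ^ k * indicator {a..<b} x"

text \<open>Support as in the paper: the set where the function is strictly positive.\<close>
definition supp :: "(real \<Rightarrow> real) \<Rightarrow> real set" where
  "supp f = {x. f x > 0}"

definition half_open_interval :: "real set \<Rightarrow> bool" where
  "half_open_interval S \<longleftrightarrow> (\<exists>a b. a < b \<and> S = {a..<b})"

end

theory Submission
  imports Defs "HOL-Computational_Algebra.Polynomial" "HOL-Real_Asymp.Real_Asymp"
begin

lemma l1: fixes a b :: real assumes "a < 0" shows "((\<lambda>x. exp (a*x^2 + b*x)) \<longlongrightarrow> 0) at_top"
  using assms by real_asymp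
lemma l2: fixes b :: real assumes "b < 0" shows "((\<lambda>x. exp (b*x)) \<longlongrightarrow> 0) at_top"
  using assms by real_asymp
lemma ae_cont_zero:
  fixes f :: "real \<Rightarrow> real"
  assumes "open U" "continuous_on U f" "AE x in lborel. x \<in> U \<longrightarrow> f x = 0" "x0 \<in> U"
  shows "f x0 = 0"
proof (rule ccontr)
  assume ne: "f x0 \<noteq> 0"
  have "isCont f x0" using assms continuous_on_eq_continuous_at by blast
  then obtain d where d: "d > 0" "\<And>y. dist y x0 < d \<Longrightarrow> dist (f y) (f x0) < \<bar>f x0\<bar>"
    using ne unfolding continuous_at_eps_delta by (metis zero_less_abs_iff)
  obtain e where e: "e > 0" "ball x0 e \<subseteq> U" using assms openE by blast
  define r where "r = min d e"
  have r: "r > 0" using d e r_def by auto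
  obtain N where N0: "{x \<in> space lborel. \<not> (x \<in> U \<longrightarrow> f x = 0)} \<subseteq> N" "N \<in> sets lborel" "emeasure lborel N = 0"
    using AE_E[OF assms(3)] by blast
  have N: "N \<in> null_sets lborel" "{x \<in> space lborel. \<not> (x \<in> U \<longrightarrow> f x = 0)} \<subseteq> N" using N0 by auto
  have sub: "{x0 - r<..<x0 + r} \<subseteq> N"
  proof
    fix y assume y: "y \<in> {x0 - r<..<x0 + r}"
    then have "dist y x0 < d" "dist y x0 < e" using r_def by (auto simp: dist_real_def)
    then have "y \<in> U" "f y \<noteq> 0" using d(2)[of y] e(2) by (auto simp: dist_real_def dist_commute)
    then show "y \<in> N" using N(2) by auto
  qed
  have "emeasure lborel {x0 - r<..<x0 + r} \<le> emeasure lborel N"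
    using sub N(1) by (intro emeasure_mono) auto
  then have "emeasure lborel {x0 - r<..<x0 + r} = 0" using N(1) by auto
  then show False using r by simp
qed

lemma exp_indep:
  fixes f :: "'t \<Rightarrow> real \<times> real" and c :: "'t \<Rightarrow> real" and M :: real
  assumes fin: "finite T" and inj: "inj_on f T"
    and z: "\<forall>x>M. (\<Sum>t\<in>T. c t * exp (fst (f t) * x^2 + snd (f t) * x)) = 0"
  shows "\<forall>t\<in>T. c t = 0"
proof (rule ccontr)
  assume "\<not> (\<forall>t\<in>T. c t = 0)"
  define T' where "T' = {t\<in>T. c t \<noteq> 0}"
  have T'ne: "T' \<noteq> {}" using \<open>\<not> (\<forall>t\<in>T. c t = 0)\<close> T'_def by auto
  have T'fin: "finite T'" using fin T'_def by auto
  define A where "A = Max (fst ` f ` T')"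
  have A_in: "A \<in> fst ` f ` T'" unfolding A_def using T'ne T'fin by (intro Max_in) auto
  have A_ge: "\<And>t. t \<in> T' \<Longrightarrow> fst (f t) \<le> A" unfolding A_def using T'fin by (intro Max_ge) auto
  define S where "S = {t\<in>T'. fst (f t) = A}"
  have Sne: "S \<noteq> {}" using A_in S_def by auto
  have Sfin: "finite S" using T'fin S_def by auto
  define B where "B = Max (snd ` f ` S)"
  have B_in: "B \<in> snd ` f ` S" unfolding B_def using Sne Sfin by (intro Max_in) auto
  have B_ge: "\<And>t. t \<in> S \<Longrightarrow> snd (f t) \<le> B" unfolding B_def using Sfin by (intro Max_ge) auto
  obtain t0 where t0: "t0 \<in> T'" "fst (f t0) = A" "snd (f t0) = B" using B_in S_def by auto
  have sumT': "\<forall>x>M. (\<Sum>t\<in>T'. c t * exp (fst (f t) * x^2 + snd (f t) * x)) = 0"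
  proof (intro allI impI)
    fix x assume "x > M"
    have "(\<Sum>t\<in>T'. c t * exp (fst (f t) * x^2 + snd (f t) * x)) = (\<Sum>t\<in>T. c t * exp (fst (f t) * x^2 + snd (f t) * x))"
      using fin by (intro sum.mono_neutral_left) (auto simp: T'_def)
    then show "(\<Sum>t\<in>T'. c t * exp (fst (f t) * x^2 + snd (f t) * x)) = 0" using z \<open>x > M\<close> by auto
  qed
  define h where "h x = (\<Sum>t\<in>T'. c t * exp ((fst (f t) - A) * x^2 + (snd (f t) - B) * x))" for x
  have h0: "\<forall>\<^sub>F x in at_top. h x = 0"
  proof (rule eventually_mono[OF eventually_gt_at_top[of M]])
    fix x assume "x > M"
    have "h x = (\<Sum>t\<in>T'. exp (- (A * x^2 + B * x)) * (c t * exp (fst (f t) * x^2 + snd (f t) * x)))"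
      unfolding h_def
    proof (intro sum.cong refl)
      fix t
      have "(fst (f t) - A) * x^2 + (snd (f t) - B) * x = - (A * x^2 + B * x) + (fst (f t) * x^2 + snd (f t) * x)"
        by (simp add: algebra_simps)
      then show "c t * exp ((fst (f t) - A) * x^2 + (snd (f t) - B) * x) = exp (- (A * x^2 + B * x)) * (c t * exp (fst (f t) * x^2 + snd (f t) * x))"
        by (simp add: exp_add)
    qed
    also have "\<dots> = 0" using sumT' \<open>x > M\<close> by (simp add: sum_distrib_left[symmetric])
    finally show "h x = 0" .
  qed
  have lim: "(h \<longlongrightarrow> (\<Sum>t\<in>T'. c t * (if t = t0 then 1 else 0))) at_top"
    unfolding h_def
  proof (intro tendsto_sum tendsto_mult tendsto_const)
    fix t assume t: "t \<in> T'"
    show "((\<lambda>x. exp ((fst (f t) - A) * x^2 + (snd (f t) - B) * x)) \<longlongrightarrow> (if t = t0 then 1 else 0)) at_top"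
    proof (cases "t = t0")
      case True then show ?thesis using t0 by simp
    next
      case False
      then have "f t \<noteq> f t0" using inj t t0(1) T'_def by (auto dest: inj_onD)
      show ?thesis
      proof (cases "fst (f t) < A")
        case True
        then show ?thesis using False l1[of "fst (f t) - A" "snd (f t) - B"] by simp
      next
        case False2: False
        then have "fst (f t) = A" using A_ge[OF t] by auto
        then have "t \<in> S" using t S_def by auto
        then have "snd (f t) < B" using B_ge[of t] \<open>f t \<noteq> f t0\<close> t0 \<open>fst (f t) = A\<close>
          by (metis order_le_less prod_eq_iff)
        then show ?thesis using False l2[of "snd (f t) - B"] \<open>fst (f t) = A\<close> by simp
      qed
    qed
  qed
  have "(\<Sum>t\<in>T'. c t * (if t = t0 then 1 else 0)) = c t0"
    using t0(1) T'fin by (simp add: if_distrib sum.delta cong: if_cong)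
  then have lim': "(h \<longlongrightarrow> c t0) at_top" using lim by simp
  have "(h \<longlongrightarrow> 0) at_top" using h0 by (simp add: tendsto_eventually)
  then have "c t0 = 0" using lim' tendsto_unique by (metis trivial_limit_at_top_linorder)
  then show False using t0 T'_def by auto
qed
lemma mono_nonneg:
  assumes "supp (interval_monomial k a b) = {c..<d}" "c < d"
  shows "interval_monomial k a b x \<ge> 0"
proof (rule ccontr)
  assume "\<not> interval_monomial k a b x \<ge> 0"
  then have neg: "x ^ k * indicator {a..<b} x < 0" by (simp add: interval_monomial_def)
  then have xin: "x \<in> {a..<b}" by (cases "x \<in> {a..<b}") auto
  then have "x ^ k < 0" using neg by simp
  then have ok: "odd k" "x < 0" by (auto simp: power_less_zero_eq)
  have "c \<in> supp (interval_monomial k a b)" using assms by auto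
  then have c: "c ^ k * indicator {a..<b} c > 0" by (simp add: supp_def interval_monomial_def)
  then have cin: "c \<in> {a..<b}" by (cases "c \<in> {a..<b}") auto
  then have "c ^ k > 0" using c by simp
  then have "c > 0" using ok by (auto simp: zero_less_power_eq)
  define y where "y = c / 2"
  have "y \<in> {a..<b}" using xin cin ok \<open>c > 0\<close> y_def by auto
  moreover have "y ^ k > 0" using \<open>c > 0\<close> y_def by simp
  ultimately have "y \<in> supp (interval_monomial k a b)" by (simp add: supp_def interval_monomial_def)
  then show False using assms \<open>c > 0\<close> y_def by auto
qed

lemma mono_form:
  assumes "supp (interval_monomial k a b) = {c..<d}" "c < d"
  shows "interval_monomial k a b x = (if x \<in> supp (interval_monomial k a b) then x ^ k else 0)"
proof (cases "x \<in> supp (interval_monomial k a b)")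
  case True
  then have "x ^ k * indicator {a..<b} x > 0" by (simp add: supp_def interval_monomial_def)
  then have "x \<in> {a..<b}" by (cases "x \<in> {a..<b}") auto
  then show ?thesis using True by (simp add: interval_monomial_def)
next
  case False
  then show ?thesis using mono_nonneg[OF assms, of x] by (simp add: supp_def)
qed

lemma poly_zero_interval:
  fixes \<alpha> :: "nat \<Rightarrow> real"
  assumes "finite S" "inj_on k S" "c < d" "\<forall>x\<in>{c<..<d}. (\<Sum>i\<in>S. \<alpha> i * x ^ (k i)) = 0"
  shows "\<forall>i\<in>S. \<alpha> i = 0"
proof
  fix i0 assume i0: "i0 \<in> S"
  define p where "p = (\<Sum>i\<in>S. monom (\<alpha> i) (k i))"
  have pe: "poly p x = (\<Sum>i\<in>S. \<alpha> i * x ^ (k i))" for x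
    unfolding p_def by (simp add: poly_sum poly_monom)
  have "p = 0"
  proof (rule ccontr)
    assume "p \<noteq> 0"
    then have "finite {x. poly p x = 0}" by (rule poly_roots_finite)
    moreover have "{c<..<d} \<subseteq> {x. poly p x = 0}" using assms(4) pe by auto
    ultimately have "finite {c<..<d}" by (rule finite_subset[rotated])
    then show False using assms(3) infinite_Ioo_iff by blast
  qed
  have "coeff p (k i0) = (\<Sum>i\<in>S. if k i = k i0 then \<alpha> i else 0)"
    unfolding p_def by (simp add: coeff_sum coeff_monom)
  also have "\<dots> = (\<Sum>i\<in>S. if i = i0 then \<alpha> i else 0)"
    using assms(2) i0 by (intro sum.cong refl) (auto dest: inj_onD)
  also have "\<dots> = \<alpha> i0" using i0 assms(1) by simp
  finally show "\<alpha> i0 = 0" using \<open>p = 0\<close> by simp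
qed


theorem lemma14:
  fixes H :: "real set set"
    and I J K :: nat
    and k :: "nat \<Rightarrow> nat" and a b :: "nat \<Rightarrow> real"
    and \<mu> \<sigma> :: "nat \<Rightarrow> real"
    and rate :: "nat \<Rightarrow> real"
  defines "m \<equiv> (\<lambda>i. interval_monomial (k i) (a i) (b i))"
      and "g \<equiv> (\<lambda>j. normal_density (\<mu> j) (\<sigma> j))"
      and "e \<equiv> (\<lambda>l. exponential_density (rate l))"
  assumes H_intervals: "\<forall>S\<in>H. half_open_interval S"
      and H_disjoint: "disjoint H"
      and ab: "\<forall>i<I. a i < b i"
      and m_supp: "\<forall>i<I. supp (m i) \<in> H"
      and m_distinct: "inj_on m {..<I}"
      and \<sigma>_pos: "\<forall>j<J. \<sigma> j > 0"
      and g_distinct: "inj_on g {..<J}"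
      and rate_pos: "\<forall>l<K. rate l > 0"
      and e_distinct: "inj_on e {..<K}"
  shows "(\<forall>i<I. integrable lborel (m i)) \<and> (\<forall>j<J. integrable lborel (g j))
           \<and> (\<forall>l<K. integrable lborel (e l))
         \<and> (\<forall>(\<alpha>::nat \<Rightarrow> real) (\<beta>::nat \<Rightarrow> real) (\<gamma>::nat \<Rightarrow> real).
              (AE x in lborel. (\<Sum>i<I. \<alpha> i * m i x) + (\<Sum>j<J. \<beta> j * g j x)
                                + (\<Sum>l<K. \<gamma> l * e l x) = 0)
              \<longrightarrow> (\<forall>i<I. \<alpha> i = 0) \<and> (\<forall>j<J. \<beta> j = 0) \<and> (\<forall>l<K. \<gamma> l = 0))"
  proof -
  have mfacts: "\<And>i. i < I \<Longrightarrow> (\<forall>x. m i x \<ge> 0) \<and> (\<forall>x. m i x = (if x \<in> supp (m i) then x ^ (k i) else 0))"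
  proof -
    fix i assume i: "i < I"
    then have "supp (m i) \<in> H" using m_supp by auto
    then obtain c d where cd: "c < d" "supp (m i) = {c..<d}" using H_intervals half_open_interval_def by blast
    show "(\<forall>x. m i x \<ge> 0) \<and> (\<forall>x. m i x = (if x \<in> supp (m i) then x ^ (k i) else 0))"
      using mono_nonneg[of "k i" "a i" "b i" c d] mono_form[of "k i" "a i" "b i" c d] cd
      unfolding m_def by auto
  qed
  have int_m: "\<forall>i<I. integrable lborel (m i)"
  proof (intro allI impI)
    fix i assume "i < I"
    have "integrable lborel (\<lambda>x. indicator {a i..b i} x *\<^sub>R (x ^ (k i)))"
      by (rule borel_integrable_compact) (auto intro!: continuous_intros)
    moreover have "m i \<in> borel_measurable lborel" unfolding m_def interval_monomial_def by measurable
    moreover have "AE x in lborel. norm (m i x) \<le> norm (indicator {a i..b i} x *\<^sub>R (x ^ (k i)))"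
      unfolding m_def interval_monomial_def by (intro AE_I2) (auto simp: indicator_def)
    ultimately show "integrable lborel (m i)"
      using Bochner_Integration.integrable_bound[where f="\<lambda>x. indicator {a i..b i} x *\<^sub>R (x ^ (k i))" and g="m i"] by blast
  qed
  have int_e: "\<forall>l<K. integrable lborel (e l)"
  proof (intro allI impI)
    fix l assume "l < K"
    then have r: "rate l > 0" using rate_pos by auto
    show "integrable lborel (e l)" unfolding e_def
    proof (rule integrableI_nonneg)
      show "AE x in lborel. 0 \<le> exponential_density (rate l) x" using r by simp
      have "(\<integral>\<^sup>+ x. ennreal (erlang_density 0 (rate l) x * x ^ 0) \<partial>lborel) = 1"
        using nn_integral_erlang_ith_moment[OF r, of 0 0] by simp
      then show "(\<integral>\<^sup>+ x. ennreal (exponential_density (rate l) x) \<partial>lborel) < \<infinity>" by simp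
    qed measurable
  qed
  have indep: "(\<forall>i<I. \<alpha> i = 0) \<and> (\<forall>j<J. \<beta> j = 0) \<and> (\<forall>l<K. \<gamma> l = 0)"
    if ae: "AE x in lborel. (\<Sum>i<I. \<alpha> i * m i x) + (\<Sum>j<J. \<beta> j * g j x) + (\<Sum>l<K. \<gamma> l * e l x) = 0"
    for \<alpha> \<beta> \<gamma> :: "nat \<Rightarrow> real"
  proof -
    define M where "M = (\<Sum>i<I. \<bar>b i\<bar>)"
    have M0: "M \<ge> 0" unfolding M_def by (intro sum_nonneg) auto
    have Mb: "b i \<le> M" if "i < I" for i
    proof -
      have "\<bar>b i\<bar> \<le> M" unfolding M_def using that by (intro member_le_sum) auto
      then show ?thesis by simp
    qed
    define A where "A j = - 1 / (2 * (\<sigma> j)^2)" for j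
    define B where "B j = \<mu> j / (\<sigma> j)^2" for j
    define C where "C j = 1 / sqrt (2 * pi * (\<sigma> j)^2) * exp (- ((\<mu> j)^2) / (2 * (\<sigma> j)^2))" for j
    have Cpos: "C j > 0" if "j < J" for j
      using \<sigma>_pos that unfolding C_def by auto
    have gform: "g j x = C j * exp (A j * x^2 + B j * x)" if "j < J" for j x
    proof -
      have s: "\<sigma> j > 0" using \<sigma>_pos that by auto
      have "- ((x - \<mu> j)^2) / (2 * (\<sigma> j)^2) = - ((\<mu> j)^2) / (2 * (\<sigma> j)^2) + (A j * x^2 + B j * x)"
        unfolding A_def B_def using s by (simp add: field_simps power2_eq_square)
      then have "exp (- ((x - \<mu> j)^2) / (2 * (\<sigma> j)^2)) = exp (- ((\<mu> j)^2) / (2 * (\<sigma> j)^2)) * exp (A j * x^2 + B j * x)"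
        by (simp only: exp_add[symmetric])
      then show ?thesis unfolding g_def normal_density_def C_def by (simp add: mult.assoc)
    qed
    have eform: "e l x = rate l * exp (0 * x^2 + (- rate l) * x)" if "x \<ge> 0" for l x
      using that unfolding e_def exponential_density_def by (simp add: mult.commute)
    define G where "G x = (\<Sum>j<J. \<beta> j * (C j * exp (A j * x^2 + B j * x)))
        + (\<Sum>l<K. \<gamma> l * (rate l * exp (0 * x^2 + (- rate l) * x)))" for x
    have Geq: "(\<Sum>i<I. \<alpha> i * m i x) + (\<Sum>j<J. \<beta> j * g j x) + (\<Sum>l<K. \<gamma> l * e l x) = G x"
      if "x > M" for x
    proof -
      have "m i x = 0" if "i < I" for i
        using Mb[OF that] \<open>x > M\<close> unfolding m_def interval_monomial_def by auto
      then have "(\<Sum>i<I. \<alpha> i * m i x) = 0" by simp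
      moreover have "(\<Sum>j<J. \<beta> j * g j x) = (\<Sum>j<J. \<beta> j * (C j * exp (A j * x^2 + B j * x)))"
        using gform by simp
      moreover have "(\<Sum>l<K. \<gamma> l * e l x) = (\<Sum>l<K. \<gamma> l * (rate l * exp (0 * x^2 + (- rate l) * x)))"
        using eform M0 \<open>x > M\<close> by simp
      ultimately show ?thesis unfolding G_def by simp
    qed
    have G0: "\<forall>x>M. G x = 0"
    proof (intro allI impI)
      fix x assume "x > M"
      show "G x = 0"
      proof (rule ae_cont_zero[of "{M<..}" G])
        show "continuous_on {M<..} G" unfolding G_def by (intro continuous_intros)
        show "AE x in lborel. x \<in> {M<..} \<longrightarrow> G x = 0"
          using ae by (rule AE_mp) (intro AE_I2, auto simp: Geq)
      qed (use \<open>x > M\<close> in auto)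
    qed
    define T where "T = ({..<J} <+> {..<K})"
    define f where "f = case_sum (\<lambda>j. (A j, B j)) (\<lambda>l. (0::real, - rate l))"
    define c where "c = case_sum (\<lambda>j. \<beta> j * C j) (\<lambda>l. \<gamma> l * rate l)"
    have TG: "(\<Sum>t\<in>T. c t * exp (fst (f t) * x^2 + snd (f t) * x)) = G x" for x
      unfolding T_def G_def by (simp add: sum.Plus f_def c_def o_def mult.assoc)
    have injf: "inj_on f T"
    proof (rule inj_onI)
      fix s t assume s: "s \<in> T" and t: "t \<in> T" and eq: "f s = f t"
      show "s = t"
      proof (cases s)
        case (Inl j)
        then have j: "j < J" using s T_def by auto
        have sj: "\<sigma> j > 0" using \<sigma>_pos j by auto
        show ?thesis
        proof (cases t)
          case (Inl j')
          then have j': "j' < J" using t T_def by auto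
          have sj': "\<sigma> j' > 0" using \<sigma>_pos j' by auto
          have "A j = A j'" "B j = B j'" using eq Inl \<open>s = Inl j\<close> f_def by auto
          then have "(\<sigma> j)^2 = (\<sigma> j')^2" unfolding A_def using sj sj' by (simp add: field_simps)
          then have "\<sigma> j = \<sigma> j'" using sj sj' by (simp add: power2_eq_iff_nonneg)
          moreover then have "\<mu> j = \<mu> j'" using \<open>B j = B j'\<close> sj unfolding B_def by (simp add: field_simps)
          ultimately have "g j = g j'" unfolding g_def by simp
          then have "j = j'" using g_distinct j j' by (auto dest: inj_onD)
          then show ?thesis using Inl \<open>s = Inl j\<close> by simp
        next
          case (Inr l)
          have "A j = 0" using eq Inr \<open>s = Inl j\<close> f_def by auto
          then show ?thesis using sj unfolding A_def by simp
        qed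
      next
        case (Inr l)
        then have l: "l < K" using s T_def by auto
        show ?thesis
        proof (cases t)
          case (Inl j)
          then have j: "j < J" using t T_def by auto
          have sj: "\<sigma> j > 0" using \<sigma>_pos j by auto
          have "A j = 0" using eq Inl \<open>s = Inr l\<close> f_def by auto
          then show ?thesis using sj unfolding A_def by simp
        next
          case (Inr l')
          then have l': "l' < K" using t T_def by auto
          have "rate l = rate l'" using eq Inr \<open>s = Inr l\<close> f_def by auto
          then have "e l = e l'" unfolding e_def by simp
          then have "l = l'" using e_distinct l l' by (auto dest: inj_onD)
          then show ?thesis using Inr \<open>s = Inr l\<close> by simp
        qed
      qed
    qed
    have c0: "\<forall>t\<in>T. c t = 0"
      by (rule exp_indep[of T f M c]) (use injf G0 TG in \<open>auto simp: T_def\<close>)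
    have \<beta>0: "\<forall>j<J. \<beta> j = 0"
    proof (intro allI impI)
      fix j assume j: "j < J"
      then have "c (Inl j) = 0" using c0 unfolding T_def by blast
      then have "\<beta> j * C j = 0" unfolding c_def by simp
      then show "\<beta> j = 0" using Cpos[OF j] by simp
    qed
    have \<gamma>0: "\<forall>l<K. \<gamma> l = 0"
    proof (intro allI impI)
      fix l assume l: "l < K"
      then have "c (Inr l) = 0" using c0 unfolding T_def by blast
      then have "\<gamma> l * rate l = 0" unfolding c_def by simp
      then show "\<gamma> l = 0" using rate_pos l by fastforce
    qed
    have ae2: "AE x in lborel. (\<Sum>i<I. \<alpha> i * m i x) = 0"
      using ae by (rule AE_mp) (intro AE_I2, auto simp: \<beta>0 \<gamma>0)
    have \<alpha>0: "\<forall>i<I. \<alpha> i = 0"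
    proof (intro allI impI)
      fix i0 assume i0: "i0 < I"
      then have "supp (m i0) \<in> H" using m_supp by auto
      then obtain c d where cd: "c < d" "supp (m i0) = {c..<d}" using H_intervals half_open_interval_def by blast
      define S where "S = {i\<in>{..<I}. supp (m i) = supp (m i0)}"
      have Sfin: "finite S" unfolding S_def by auto
      have i0S: "i0 \<in> S" unfolding S_def using i0 by auto
      have injk: "inj_on k S"
      proof (rule inj_onI)
        fix i j assume i: "i \<in> S" and j: "j \<in> S" and kk: "k i = k j"
        have "m i = m j"
        proof
          fix x
          show "m i x = m j x"
            using mfacts[of i] mfacts[of j] i j kk unfolding S_def by auto
        qed
        then show "i = j" using m_distinct i j unfolding S_def by (auto dest: inj_onD)
      qed
      have eqS: "(\<Sum>i<I. \<alpha> i * m i x) = (\<Sum>i\<in>S. \<alpha> i * x ^ (k i))" if x: "x \<in> {c<..<d}" for x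
      proof -
        have xs: "x \<in> supp (m i0)" using x cd by auto
        have "(\<Sum>i<I. \<alpha> i * m i x) = (\<Sum>i<I. if supp (m i) = supp (m i0) then \<alpha> i * x ^ (k i) else 0)"
        proof (intro sum.cong refl)
          fix i assume i: "i \<in> {..<I}"
          show "\<alpha> i * m i x = (if supp (m i) = supp (m i0) then \<alpha> i * x ^ (k i) else 0)"
          proof (cases "supp (m i) = supp (m i0)")
            case True
            then show ?thesis using mfacts[of i] i xs by auto
          next
            case False
            have "supp (m i) \<in> H" using m_supp i by auto
            then have "supp (m i) \<inter> supp (m i0) = {}"
              using disjointD[OF H_disjoint] \<open>supp (m i0) \<in> H\<close> False by blast
            then have "x \<notin> supp (m i)" using xs by auto
            then show ?thesis using mfacts[of i] i False by auto
          qed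
        qed
        also have "\<dots> = (\<Sum>i\<in>S. \<alpha> i * x ^ (k i))"
          unfolding S_def by (rule sum.inter_filter[symmetric]) auto
        finally show ?thesis .
      qed
      have "\<forall>x\<in>{c<..<d}. (\<Sum>i\<in>S. \<alpha> i * x ^ (k i)) = 0"
      proof
        fix x assume x: "x \<in> {c<..<d}"
        show "(\<Sum>i\<in>S. \<alpha> i * x ^ (k i)) = 0"
        proof (rule ae_cont_zero[of "{c<..<d}" "\<lambda>x. \<Sum>i\<in>S. \<alpha> i * x ^ k i"])
          show "continuous_on {c<..<d} (\<lambda>x. \<Sum>i\<in>S. \<alpha> i * x ^ k i)" by (intro continuous_intros)
          show "AE x in lborel. x \<in> {c<..<d} \<longrightarrow> (\<Sum>i\<in>S. \<alpha> i * x ^ k i) = 0"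
            using ae2 by (rule AE_mp) (intro AE_I2, auto simp: eqS)
        qed (use x in auto)
      qed
      then show "\<alpha> i0 = 0" using poly_zero_interval[OF Sfin injk cd(1)] i0S by blast
    qed
    show ?thesis using \<alpha>0 \<beta>0 \<gamma>0 by blast
  qed
  show ?thesis using int_m int_e indep \<sigma>_pos integrable_normal_density unfolding g_def by auto
qed

end
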